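(* Let $\kappa$ be an infinite cardinal. The lattices $B=\{(A,\,A\cap C,\,C) : A,C\in\mathcal{F}(\kappa),\ A\sim C\}$ and $E=\{(A,B,A\cap B): A,B\in\mathcal{F}(\kappa)\}$, both ordered componentwise, are not isomorphic.
   Context: $\mathcal{F}(\kappa)$ is the Boolean lattice of subsets $X\subseteq\kappa$ that are finite or cofinite. For $A,C\in\mathcal{F}(\kappa)$, $A\sim C$ means that either both $A,C$ are finite or both $\kappa\setminus A,\kappa\setminus C$ are finite. Both $B$ and $E$ are sublattices of the lattice $S$ of balanced triples $(A,B,C)\in\mathcal{F}(\kappa)^3$ (i.e. $A\cap B=A\cap C=B\cap C$) with $C\setminus((A\cap B)\cup(A\cap C)\cup(B\cap C))$ finite; $E$ is the range of the map $f(A,B,C)=(\kappa\setminus A,\kappa\setminus(B\cup C),\kappa\setminus(A\cup B\cup C))$ on $S$. *)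

theory Defs
  imports Main
begin

text \<open>The Boolean lattice F(kappa) of finite or cofinite subsets of kappa; kappa is
  represented by the universe of a type 'k (infinite cardinal: infinite UNIV).\<close>
definition FinCofin :: "'k set set" where
  "FinCofin = {X. finite X \<or> finite (- X)}"

definition simeq :: "'k set \<Rightarrow> 'k set \<Rightarrow> bool" where
  "simeq A C \<longleftrightarrow> (finite A \<and> finite C) \<or> (finite (- A) \<and> finite (- C))"

definition latB :: "('k set \<times> 'k set \<times> 'k set) set" where
  "latB = {(A, A \<inter> C, C) | A C. A \<in> FinCofin \<and> C \<in> FinCofin \<and> simeq A C}"

definition latE :: "('k set \<times> 'k set \<times> 'k set) set" where
  "latE = {(A, B, A \<inter> B) | A B. A \<in> FinCofin \<and> B \<in> FinCofin}"

definition tle :: "('k set \<times> 'k set \<times> 'k set) \<Rightarrow> ('k set \<times> 'k set \<times> 'k set) \<Rightarrow> bool" where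
  "tle x y \<longleftrightarrow> fst x \<subseteq> fst y \<and> fst (snd x) \<subseteq> fst (snd y) \<and> snd (snd x) \<subseteq> snd (snd y)"

text \<open>Order isomorphism between two componentwise-ordered sets of triples
  (for lattices equivalent to lattice isomorphism).\<close>
definition triple_order_iso :: "('k set \<times> 'k set \<times> 'k set) set \<Rightarrow> ('k set \<times> 'k set \<times> 'k set) set \<Rightarrow> bool" where
  "triple_order_iso P Q \<longleftrightarrow> (\<exists>f. bij_betw f P Q \<and> (\<forall>x\<in>P. \<forall>y\<in>P. tle x y \<longleftrightarrow> tle (f x) (f y)))"

end

theory Submission
  imports Defs
begin

definition atomP :: "('k set \<times> 'k set \<times> 'k set) set \<Rightarrow> ('k set \<times> 'k set \<times> 'k set) \<Rightarrow> bool" where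
  "atomP P a \<longleftrightarrow> a \<in> P \<and> \<not> (\<forall>w\<in>P. tle a w) \<and> (\<forall>z\<in>P. tle z a \<longrightarrow> z = a \<or> (\<forall>w\<in>P. tle z w))"

definition goodP :: "('k set \<times> 'k set \<times> 'k set) set \<Rightarrow> bool" where
  "goodP P \<longleftrightarrow> (\<forall>x\<in>P. finite {a. atomP P a \<and> tle a x} \<or> finite {a. atomP P a \<and> \<not> tle a x})"

lemma atom_back:
  assumes bij: "bij_betw f P Q" and ord: "\<forall>x\<in>P. \<forall>y\<in>P. tle x y \<longleftrightarrow> tle (f x) (f y)"
    and a: "a \<in> P" and at: "atomP Q (f a)"
  shows "atomP P a"
proof -
  have img: "f ` P = Q" and inj: "inj_on f P" using bij by (auto simp: bij_betw_def)
  have 1: "\<not> (\<forall>w\<in>P. tle a w)"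
  proof
    assume h: "\<forall>w\<in>P. tle a w"
    from at obtain w where "w \<in> Q" "\<not> tle (f a) w" unfolding atomP_def by blast
    then obtain w' where "w' \<in> P" "w = f w'" using img by blast
    then show False using h ord a \<open>\<not> tle (f a) w\<close> by blast
  qed
  have 2: "\<forall>z\<in>P. tle z a \<longrightarrow> z = a \<or> (\<forall>w\<in>P. tle z w)"
  proof (intro ballI impI)
    fix z assume z: "z \<in> P" "tle z a"
    then have "tle (f z) (f a)" using ord a by blast
    moreover have "f z \<in> Q" using z img by blast
    ultimately have "f z = f a \<or> (\<forall>w\<in>Q. tle (f z) w)" using at unfolding atomP_def by blast
    then show "z = a \<or> (\<forall>w\<in>P. tle z w)"
    proof
      assume "f z = f a" then show ?thesis using inj z a by (auto dest: inj_onD)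
    next
      assume h: "\<forall>w\<in>Q. tle (f z) w"
      have "\<forall>w\<in>P. tle z w" using h img ord z by blast
      then show ?thesis by blast
    qed
  qed
  show ?thesis using a 1 2 unfolding atomP_def by blast
qed

lemma iso_good:
  assumes iso: "triple_order_iso P Q" and g: "goodP P"
  shows "goodP Q"
proof -
  obtain f where bij: "bij_betw f P Q" and ord: "\<forall>x\<in>P. \<forall>y\<in>P. tle x y \<longleftrightarrow> tle (f x) (f y)"
    using iso unfolding triple_order_iso_def by blast
  have img: "f ` P = Q" using bij by (auto simp: bij_betw_def)
  show ?thesis unfolding goodP_def
  proof
    fix y assume "y \<in> Q"
    then obtain x where x: "x \<in> P" "y = f x" using img by blast
    have s1: "{b. atomP Q b \<and> tle b y} \<subseteq> f ` {a. atomP P a \<and> tle a x}"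
    proof
      fix b assume b: "b \<in> {b. atomP Q b \<and> tle b y}"
      then have "b \<in> Q" unfolding atomP_def by blast
      then obtain a where a: "a \<in> P" "b = f a" using img by blast
      then have "atomP P a" using atom_back[OF bij ord] b by blast
      moreover have "tle a x" using ord a x b by blast
      ultimately show "b \<in> f ` {a. atomP P a \<and> tle a x}" using a by blast
    qed
    have s2: "{b. atomP Q b \<and> \<not> tle b y} \<subseteq> f ` {a. atomP P a \<and> \<not> tle a x}"
    proof
      fix b assume b: "b \<in> {b. atomP Q b \<and> \<not> tle b y}"
      then have "b \<in> Q" unfolding atomP_def by blast
      then obtain a where a: "a \<in> P" "b = f a" using img by blast
      then have "atomP P a" using atom_back[OF bij ord] b by blast
      moreover have "\<not> tle a x" using ord a x b by blast
      ultimately show "b \<in> f ` {a. atomP P a \<and> \<not> tle a x}" using a by blast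
    qed
    from g x have "finite {a. atomP P a \<and> tle a x} \<or> finite {a. atomP P a \<and> \<not> tle a x}"
      unfolding goodP_def by blast
    then show "finite {a. atomP Q a \<and> tle a y} \<or> finite {a. atomP Q a \<and> \<not> tle a y}"
      using s1 s2 finite_subset by blast
  qed
qed

lemma atomB:
  assumes "atomP (latB :: ('k set \<times> 'k set \<times> 'k set) set) a"
  shows "a \<in> (\<lambda>k. ({k}, {}, {})) ` UNIV \<union> (\<lambda>k. ({}, {}, {k})) ` UNIV"
proof -
  from assms obtain A C where aa: "a = (A, A \<inter> C, C)" and inB: "a \<in> latB"
    unfolding atomP_def latB_def by blast
  have bot: "({}, {}, {}) \<in> (latB :: ('k set \<times> 'k set \<times> 'k set) set)"
    unfolding latB_def FinCofin_def simeq_def by auto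
  have nb: "\<not> (\<forall>w\<in>latB. tle a w)" using assms unfolding atomP_def by blast
  have below: "\<forall>z\<in>latB. tle z a \<longrightarrow> z = a \<or> (\<forall>w\<in>latB. tle z w)" using assms unfolding atomP_def by blast
  have "A \<noteq> {} \<or> C \<noteq> {}"
  proof (rule ccontr)
    assume "\<not> (A \<noteq> {} \<or> C \<noteq> {})"
    then have "\<forall>w\<in>latB. tle a w" using aa unfolding tle_def by auto
    then show False using nb by blast
  qed
  then show ?thesis
  proof
    assume "A \<noteq> {}"
    then obtain k where k: "k \<in> A" by blast
    have zB: "({k}, {}, {}) \<in> (latB :: ('k set \<times> 'k set \<times> 'k set) set)"
      unfolding latB_def FinCofin_def simeq_def by force
    have "tle ({k}, {}, {}) a" using aa k unfolding tle_def by auto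
    then have "({k}, {}, {}) = a \<or> (\<forall>w\<in>latB. tle ({k}, {}, {}) w)" using below zB by blast
    moreover have "\<not> tle ({k}, {}, {}) ({}, {}, {})" unfolding tle_def by auto
    ultimately have "a = ({k}, {}, {})" using bot by blast
    then show ?thesis by blast
  next
    assume "C \<noteq> {}"
    then obtain k where k: "k \<in> C" by blast
    have zB: "({}, {}, {k}) \<in> (latB :: ('k set \<times> 'k set \<times> 'k set) set)"
      unfolding latB_def FinCofin_def simeq_def by force
    have "tle ({}, {}, {k}) a" using aa k unfolding tle_def by auto
    then have "({}, {}, {k}) = a \<or> (\<forall>w\<in>latB. tle ({}, {}, {k}) w)" using below zB by blast
    moreover have "\<not> tle ({}, {}, {k}) ({}, {}, {})" unfolding tle_def by auto
    ultimately have "a = ({}, {}, {k})" using bot by blast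
    then show ?thesis by blast
  qed
qed

lemma goodB: "goodP (latB :: ('k set \<times> 'k set \<times> 'k set) set)"
  unfolding goodP_def
proof
  fix x :: "'k set \<times> 'k set \<times> 'k set" assume "x \<in> latB"
  then obtain A C where x: "x = (A, A \<inter> C, C)" and fc: "simeq A C"
    unfolding latB_def by blast
  show "finite {a. atomP latB a \<and> tle a x} \<or> finite {a. atomP latB a \<and> \<not> tle a x}"
  proof (cases "finite A \<and> finite C")
    case True
    have "{a. atomP latB a \<and> tle a x} \<subseteq> (\<lambda>k. ({k}, {}, {})) ` A \<union> (\<lambda>k. ({}, {}, {k})) ` C"
    proof
      fix a assume a: "a \<in> {a. atomP latB a \<and> tle a x}"
      then have "a \<in> (\<lambda>k. ({k}, {}, {})) ` UNIV \<union> (\<lambda>k. ({}, {}, {k})) ` UNIV"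
        using atomB by blast
      then show "a \<in> (\<lambda>k. ({k}, {}, {})) ` A \<union> (\<lambda>k. ({}, {}, {k})) ` C"
        using a x unfolding tle_def by auto
    qed
    then show ?thesis using True finite_subset by blast
  next
    case False
    then have cf: "finite (- A)" "finite (- C)" using fc unfolding simeq_def by auto
    have "{a. atomP latB a \<and> \<not> tle a x} \<subseteq> (\<lambda>k. ({k}, {}, {})) ` (- A) \<union> (\<lambda>k. ({}, {}, {k})) ` (- C)"
    proof
      fix a assume a: "a \<in> {a. atomP latB a \<and> \<not> tle a x}"
      then have "a \<in> (\<lambda>k. ({k}, {}, {})) ` UNIV \<union> (\<lambda>k. ({}, {}, {k})) ` UNIV"
        using atomB by blast
      then show "a \<in> (\<lambda>k. ({k}, {}, {})) ` (- A) \<union> (\<lambda>k. ({}, {}, {k})) ` (- C)"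
        using a x unfolding tle_def by auto
    qed
    then show ?thesis using cf finite_subset by blast
  qed
qed

lemma atomE1: "atomP (latE :: ('k set \<times> 'k set \<times> 'k set) set) ({k}, {}, {})"
  unfolding atomP_def
proof (intro conjI)
  show "({k}, {}, {}) \<in> (latE :: ('k set \<times> 'k set \<times> 'k set) set)"
    unfolding latE_def FinCofin_def by force
  have "({}, {}, {}) \<in> (latE :: ('k set \<times> 'k set \<times> 'k set) set)"
    unfolding latE_def FinCofin_def by force
  then show "\<not> (\<forall>w\<in>latE. tle ({k}, {}, {}) w)" unfolding tle_def by fastforce
  show "\<forall>z\<in>latE. tle z ({k}, {}, {}) \<longrightarrow> z = ({k}, {}, {}) \<or> (\<forall>w\<in>latE. tle z w)"
    unfolding latE_def tle_def by (auto simp: subset_singleton_iff)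
qed

lemma atomE2: "atomP (latE :: ('k set \<times> 'k set \<times> 'k set) set) ({}, {k}, {})"
  unfolding atomP_def
proof (intro conjI)
  show "({}, {k}, {}) \<in> (latE :: ('k set \<times> 'k set \<times> 'k set) set)"
    unfolding latE_def FinCofin_def by force
  have "({}, {}, {}) \<in> (latE :: ('k set \<times> 'k set \<times> 'k set) set)"
    unfolding latE_def FinCofin_def by force
  then show "\<not> (\<forall>w\<in>latE. tle ({}, {k}, {}) w)" unfolding tle_def by fastforce
  show "\<forall>z\<in>latE. tle z ({}, {k}, {}) \<longrightarrow> z = ({}, {k}, {}) \<or> (\<forall>w\<in>latE. tle z w)"
    unfolding latE_def tle_def by (auto simp: subset_singleton_iff)
qed

lemma notgoodE:
  assumes inf: "infinite (UNIV :: 'k set)"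
  shows "\<not> goodP (latE :: ('k set \<times> 'k set \<times> 'k set) set)"
proof
  assume g: "goodP (latE :: ('k set \<times> 'k set \<times> 'k set) set)"
  let ?x = "(UNIV :: 'k set, {} :: 'k set, {} :: 'k set)"
  have xE: "?x \<in> latE" unfolding latE_def FinCofin_def by force
  have s1: "(\<lambda>k. ({k}, {}, {})) ` UNIV \<subseteq> {a. atomP latE a \<and> tle a ?x}"
    using atomE1 unfolding tle_def by auto
  have s2: "(\<lambda>k. ({}, {k}, {})) ` UNIV \<subseteq> {a. atomP latE a \<and> \<not> tle a ?x}"
    using atomE2 unfolding tle_def by auto
  have i1: "infinite ((\<lambda>k::'k. ({k}, {} :: 'k set, {} :: 'k set)) ` UNIV)"
    using inf by (auto dest!: finite_imageD simp: inj_on_def)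
  have i2: "infinite ((\<lambda>k::'k. ({} :: 'k set, {k}, {} :: 'k set)) ` UNIV)"
    using inf by (auto dest!: finite_imageD simp: inj_on_def)
  from g xE have "finite {a. atomP latE a \<and> tle a ?x} \<or> finite {a. atomP latE a \<and> \<not> tle a ?x}"
    unfolding goodP_def by blast
  then show False using s1 s2 i1 i2 finite_subset by blast
qed

theorem proposition5p9:
  assumes "infinite (UNIV :: 'k set)"
  shows "\<not> triple_order_iso (latB :: ('k set \<times> 'k set \<times> 'k set) set) latE"
  using iso_good goodB notgoodE[OF assms] by blast

end
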